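(* Let $\mathbb{A}$ be a set of symbols and let $A=a_1a_2\dots a_m$ be a rainbow sequence with $a_i\in\mathbb{A}$ for all $i=1,\dots,m$. Let $r\ge 0$ and $1\le n_1<n_2<\dots<n_r<m$ be integers, and let $B^0,B^1,\dots,B^{r+1}$ be single symbols (not necessarily distinct from each other) with $B^i\notin\mathbb{A}$ for all $i$. Then the sequence $$S=B^0\,A_{1,n_1}\,B^1\,A_{n_1+1,n_2}\,\dots\,B^r\,A_{n_r+1,m}\,B^{r+1}$$ is nonrepetitive.
   Context: A finite sequence $R=r_1r_2\dots r_{2n}$ ($n\ge1$) is a repetition if $r_i=r_{n+i}$ for all $i=1,\dots,n$. A sequence is repetitive if some block of consecutive terms of it is a repetition, and nonrepetitive otherwise. A sequence of length $k$ consisting of $k$ pairwise different symbols is called rainbow. For a sequence $A=a_1\dots a_m$ and $1\le k\le l\le m$, $A_{k,l}$ denotes the block $a_ka_{k+1}\dots a_l$. *)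

theory Defs
  imports Main
begin

text \<open>Sequences are lists; positions are 1-indexed as in the paper.\<close>

definition block :: "'a list \<Rightarrow> nat \<Rightarrow> nat \<Rightarrow> 'a list" where
  "block A k l = take (l + 1 - k) (drop (k - 1) A)"

definition repetition :: "'a list \<Rightarrow> bool" where
  "repetition R \<longleftrightarrow> (\<exists>h\<ge>1. length R = 2 * h \<and> (\<forall>i\<in>{1..h}. R ! (i - 1) = R ! (h + i - 1)))"

definition repetitive :: "'a list \<Rightarrow> bool" where
  "repetitive S \<longleftrightarrow> (\<exists>k l. 1 \<le> k \<and> k \<le> l \<and> l \<le> length S \<and> repetition (block S k l))"

definition nonrepetitive :: "'a list \<Rightarrow> bool" where
  "nonrepetitive S \<longleftrightarrow> \<not> repetitive S"

definition rainbow :: "'a list \<Rightarrow> bool" where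
  "rainbow A \<longleftrightarrow> distinct A"

text \<open>The sequence B^0 A_{1,n_1} B^1 A_{n_1+1,n_2} ... B^r A_{n_r+1,m} B^{r+1}.\<close>
definition insert_seq :: "'a list \<Rightarrow> nat \<Rightarrow> (nat \<Rightarrow> nat) \<Rightarrow> (nat \<Rightarrow> 'a) \<Rightarrow> 'a list" where
  "insert_seq A r n B =
     concat (map (\<lambda>j. B j # block A ((if j = 0 then 0 else n j) + 1)
                                   (if j = r then length A else n (Suc j))) [0..<Suc r])
     @ [B (Suc r)]"

end

theory Submission
  imports Defs
begin

fun okp :: "('a \<Rightarrow> bool) \<Rightarrow> 'a list \<Rightarrow> bool" where
  "okp P (x # y # zs) = ((P x \<or> P y) \<and> okp P (y # zs))"
| "okp P _ = True"

lemma okp_nth: "okp P S \<Longrightarrow> Suc i < length S \<Longrightarrow> P (S!i) \<or> P (S ! Suc i)"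
proof (induction P S arbitrary: i rule: okp.induct)
  case (1 P x y zs)
  then show ?case by (cases i) auto
qed auto

lemma okp_append: "okp P xs \<Longrightarrow> okp P ys \<Longrightarrow> (xs = [] \<or> ys = [] \<or> P (last xs) \<or> P (hd ys))
   \<Longrightarrow> okp P (xs @ ys)"
proof (induction P xs rule: okp.induct)
  case (1 P x y zs) then show ?case by auto
next
  case ("2_1" P) then show ?case by auto
next
  case ("2_2" P v) then show ?case by (cases ys) auto
qed

lemma okp_all: "\<forall>x\<in>set xs. P x \<Longrightarrow> okp P xs"
  by (induction P xs rule: okp.induct) auto

lemma okp_concat:
  assumes "\<forall>j\<in>set js. c j \<noteq> [] \<and> (\<forall>x\<in>set (c j). P x)"
  shows "okp P (concat (map (\<lambda>j. b j # c j) js) @ [z])"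
  using assms
proof (induction js)
  case Nil then show ?case by simp
next
  case (Cons j js)
  let ?S' = "concat (map (\<lambda>j. b j # c j) js) @ [z]"
  have c: "c j \<noteq> []" "\<forall>x\<in>set (c j). P x" using Cons.prems by auto
  have "okp P (c j @ ?S')"
    using okp_append[OF okp_all[OF c(2)] Cons.IH] Cons.prems c by auto
  moreover have "okp P ([b j] @ (c j @ ?S'))"
    apply (rule okp_append) using calculation c by (auto simp: hd_append)
  ultimately show ?case by simp
qed

lemma dlemma:
  assumes "distinct (filter P S)" "p < q" "q < length S" "S!p = S!q"
  shows "\<not> P (S!p)"
proof
  assume P: "P (S!p)"
  have "S!p \<in> set (filter P (take q S))" using assms P
    by (auto simp: in_set_conv_nth intro!: exI[of _ p])
  moreover have "S!q \<in> set (filter P (drop q S))" using assms P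
    by (auto simp: in_set_conv_nth intro!: exI[of _ 0])
  moreover have "distinct (filter P (take q S) @ filter P (drop q S))"
    using assms(1) by (metis append_take_drop_id filter_append)
  ultimately show False using assms(4) by auto
qed

lemma telescope:
  assumes "\<And>j. j < k \<Longrightarrow> f j \<le> f (Suc j)"
  shows "concat (map (\<lambda>j. take (f (Suc j) - f j) (drop (f j) xs)) [0..<k])
         = take (f k - f 0) (drop (f 0) xs)"
  using assms
proof (induction k)
  case 0 then show ?case by simp
next
  case (Suc k)
  have m: "f 0 \<le> f k"
    using Suc.prems by (induction k) (auto intro: order_trans)
  have "take (f k - f 0) (drop (f 0) xs) @ take (f (Suc k) - f k) (drop (f k) xs)
      = take (f (Suc k) - f 0) (drop (f 0) xs)"
  proof -
    have d: "drop (f k) xs = drop (f k - f 0) (drop (f 0) xs)" using m by simp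
    have e: "f (Suc k) - f 0 = (f k - f 0) + (f (Suc k) - f k)" using m Suc.prems[of k] by simp
    show ?thesis unfolding e take_add d ..
  qed
  then show ?case using Suc by simp
qed

theorem corollary2:
  fixes Alph :: "'a set" and A :: "'a list" and r :: nat
    and n :: "nat \<Rightarrow> nat" and B :: "nat \<Rightarrow> 'a"
  assumes "rainbow A"
    and "set A \<subseteq> Alph"
    and "length A \<ge> 1"
    and "r \<ge> 1 \<Longrightarrow> 1 \<le> n 1"
    and "\<And>i. 1 \<le> i \<Longrightarrow> i < r \<Longrightarrow> n i < n (Suc i)"
    and "r \<ge> 1 \<Longrightarrow> n r < length A"
    and "\<And>i. i \<le> Suc r \<Longrightarrow> B i \<notin> Alph"
  shows "nonrepetitive (insert_seq A r n B)"
proof -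
  define f where "f j = (if j = 0 then 0 else if j \<le> r then n j else length A)" for j
  define C where "C j = take (f (Suc j) - f j) (drop (f j) A)" for j
  have finc: "f j < f (Suc j)" if "j \<le> r" for j
  proof (cases "j = 0")
    case True then show ?thesis using assms(3,4) f_def by (cases "r = 0") auto
  next
    case False
    then show ?thesis using that assms(5,6) f_def by (cases "j = r") auto
  qed
  have fle: "f j \<le> length A" for j
  proof (cases "j = 0 \<or> j > r")
    case True then show ?thesis by (auto simp: f_def)
  next
    case False
    have "f j \<le> f r" if "1 \<le> j" "j \<le> r" for j
      using that
    proof (induction "r - j" arbitrary: j)
      case 0 then show ?case by simp
    next
      case (Suc x)
      then have "f (Suc j) \<le> f r" by simp
      moreover have "f j < f (Suc j)" using finc Suc.prems by simp
      ultimately show ?case by simp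
    qed
    moreover have "f r \<le> length A" using assms(6) by (auto simp: f_def)
    moreover have "1 \<le> j" "j \<le> r" using False by auto
    ultimately show ?thesis by (meson order_trans)
  qed
  have blk: "block A ((if j = 0 then 0 else n j) + 1) (if j = r then length A else n (Suc j)) = C j"
    if "j < Suc r" for j
    using that by (auto simp: block_def C_def f_def)
  have S: "insert_seq A r n B = concat (map (\<lambda>j. B j # C j) [0..<Suc r]) @ [B (Suc r)]"
  proof -
    have "map (\<lambda>j. B j # block A ((if j = 0 then 0 else n j) + 1) (if j = r then length A else n (Suc j))) [0..<Suc r]
        = map (\<lambda>j. B j # C j) [0..<Suc r]"
      by (rule map_cong[OF refl]) (use blk in \<open>simp del: upt_Suc\<close>)
    then show ?thesis unfolding insert_seq_def by (simp only:)
  qed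
  define S where "S = insert_seq A r n B"
  have cA: "concat (map C [0..<Suc r]) = A"
    unfolding C_def using telescope[of "Suc r" f A] finc
    by (simp add: f_def less_Suc_eq_le order_less_imp_le)
  have Cne: "C j \<noteq> []" if "j \<le> r" for j
    using finc[OF that] fle[of j] fle[of "Suc j"] by (auto simp: C_def)
  have CA: "set (C j) \<subseteq> set A" for j unfolding C_def by (meson set_drop_subset set_take_subset order_trans)
  have filt: "filter (\<lambda>x. x \<in> Alph) S = A"
  proof -
    have "filter (\<lambda>x. x \<in> Alph) (concat (map (\<lambda>j. B j # C j) js)) = concat (map C js)"
      if "\<forall>j\<in>set js. j \<le> r" for js
      using that
    proof (induction js)
      case (Cons j js)
      have "filter (\<lambda>x. x \<in> Alph) (C j) = C j" using CA[of j] assms(2) by (auto simp: filter_id_conv)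
      then show ?case using Cons assms(7)[of j] by auto
    qed simp
    from this[of "[0..<Suc r]"] have "filter (\<lambda>x. x \<in> Alph) (concat (map (\<lambda>j. B j # C j) [0..<Suc r])) = A"
      using cA by (simp del: upt_Suc)
    then show ?thesis unfolding S_def S using assms(7)[of "Suc r"] by (simp del: upt_Suc)
  qed
  have dist: "distinct (filter (\<lambda>x. x \<in> Alph) S)"
    using filt assms(1) by (simp add: rainbow_def)
  have ok: "okp (\<lambda>x. x \<in> Alph) S"
    unfolding S_def S using Cne CA assms(2) by (intro okp_concat) auto
  show ?thesis
  proof (unfold nonrepetitive_def repetitive_def, clarify)
    fix k l assume kl: "1 \<le> k" "k \<le> l" "l \<le> length (insert_seq A r n B)"
      and rep: "repetition (block (insert_seq A r n B) k l)"
    define R where "R = block S k l"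
    obtain h where h: "h \<ge> 1" "length R = 2 * h" "\<forall>i\<in>{1..h}. R ! (i - 1) = R ! (h + i - 1)"
      using rep unfolding repetition_def R_def S_def by blast
    define p where "p = k - 1"
    have len: "p + 2 * h \<le> length S" using h(1,2) unfolding R_def block_def p_def by (simp add: min_def split: if_splits)
    have Rn: "R ! j = S ! (p + j)" if "j < 2 * h" for j
      using that h(2) unfolding R_def block_def p_def by auto
    have "R ! (1 - 1) = R ! (h + 1 - 1)" using h(3) h(1) by (intro bspec[OF h(3)]) auto
    then have e1: "S ! p = S ! (p + h)" using Rn[of 0] Rn[of h] h(1) by simp
    have n1: "S ! p \<notin> Alph" using dlemma[OF dist, of p "p+h"] e1 len h(1) by auto
    have n2: "S ! (Suc p) \<notin> Alph"
    proof (cases "h = 1")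
      case True then show ?thesis using n1 e1 by simp
    next
      case False
      then have "R ! (2 - 1) = R ! (h + 2 - 1)" using h(1) by (intro bspec[OF h(3)]) auto
      then have "S ! (p+1) = S ! (p + h + 1)" using Rn[of 1] Rn[of "h+1"] h(1) False by simp
      then show ?thesis using dlemma[OF dist, of "p+1" "p+h+1"] len h(1) False by auto
    qed
    show False using okp_nth[OF ok, of p] len h(1) n1 n2 by auto
  qed
qed

end
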